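(* Let $\Lambda$ be a lattice of signature $(1,n-1)$, $h\in\Lambda$ with $(h^2)>0$, $\mathcal C^+:=\{x\in\Lambda_{\mathbb R}:(x^2)>0,\ (x,h)>0\}$, and $N>0$. Let $P\subset\Lambda_{\mathbb R}$ be a 2-plane defined over $\mathbb Q$ such that $P_{\mathbb Q}=P\cap\Lambda_{\mathbb Q}$ contains a nonzero isotropic vector. Then the set $\{v\in\Lambda : v^\perp\cap P\cap\mathcal C^+\neq\emptyset,\ (v^2)>-N\}$ is finite.
   Context: $(x^2)$ abbreviates $(x,x)$; $v^\perp$ is the orthogonal hyperplane in $\Lambda_{\mathbb R}$. *)

theory Defs
  imports "HOL-Analysis.Analysis"
begin

text \<open>A lattice of rank n is modelled as Z^n inside R^n = real^'n, with the symmetric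
  bilinear form given by a symmetric integer Gram matrix Q.\<close>

definition integral_vec :: "real^'n \<Rightarrow> bool" where
  "integral_vec x \<longleftrightarrow> (\<forall>i. x $ i \<in> \<int>)"

definition rational_vec :: "real^'n \<Rightarrow> bool" where
  "rational_vec x \<longleftrightarrow> (\<forall>i. x $ i \<in> \<rat>)"

definition bform :: "real^'n^'n \<Rightarrow> real^'n \<Rightarrow> real^'n \<Rightarrow> real" where
  "bform Q x y = x \<bullet> (Q *v y)"

definition lattice_gram :: "real^'n^'n \<Rightarrow> bool" where
  "lattice_gram Q \<longleftrightarrow> transpose Q = Q \<and> (\<forall>i j. Q $ i $ j \<in> \<int>)"

definition signature_1_nm1 :: "real^'n^'n \<Rightarrow> bool" where
  "signature_1_nm1 Q \<longleftrightarrow> (\<exists>(S::real^'n^'n) i0. invertible S \<and>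
     transpose S ** Q ** S = (\<chi> i j. if i = j then (if i = i0 then 1 else -1) else 0))"

definition pos_cone :: "real^'n^'n \<Rightarrow> real^'n \<Rightarrow> (real^'n) set" where
  "pos_cone Q h = {x. bform Q x x > 0 \<and> bform Q x h > 0}"

definition rational_2plane :: "(real^'n) set \<Rightarrow> bool" where
  "rational_2plane P \<longleftrightarrow> (\<exists>a b. rational_vec a \<and> rational_vec b \<and> P = span {a, b}) \<and> dim P = 2"

end

theory Submission
  imports Defs
begin


lemma bform_sym: "lattice_gram Q \<Longrightarrow> bform Q x y = bform Q y x"
  unfolding bform_def lattice_gram_def
  by (metis dot_lmul_matrix inner_commute transpose_matrix_vector)

lemma bform_add_left: "bform Q (x + y) z = bform Q x z + bform Q y z"
  by (simp add: bform_def inner_add_left)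
lemma bform_add_right: "bform Q z (x + y) = bform Q z x + bform Q z y"
  by (simp add: bform_def matrix_vector_right_distrib inner_add_right)
lemma bform_diff_left: "bform Q (x - y) z = bform Q x z - bform Q y z"
  by (simp add: bform_def inner_diff_left)
lemma bform_diff_right: "bform Q z (x - y) = bform Q z x - bform Q z y"
  by (simp add: bform_def matrix_vector_mult_diff_distrib inner_diff_right)
lemma bform_scale_left: "bform Q (a *\<^sub>R x) z = a * bform Q x z"
  by (simp add: bform_def)
lemma bform_scale_right: "bform Q z (a *\<^sub>R x) = a * bform Q z x"
  by (simp add: bform_def matrix_vector_mult_scaleR)
lemma bform_zero_left[simp]: "bform Q 0 z = 0" by (simp add: bform_def)
lemma bform_zero_right[simp]: "bform Q z 0 = 0" by (simp add: bform_def)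

lemmas bform_lin = bform_add_left bform_add_right bform_diff_left bform_diff_right
  bform_scale_left bform_scale_right

lemma bform_int: "lattice_gram Q \<Longrightarrow> integral_vec x \<Longrightarrow> integral_vec y \<Longrightarrow> bform Q x y \<in> \<int>"
  unfolding bform_def lattice_gram_def integral_vec_def inner_vec_def matrix_vector_mult_def
  by (auto intro!: Ints_sum Ints_mult)

lemma bform_cont: "continuous_on UNIV (\<lambda>q. bform Q q q)"
  unfolding bform_def by (intro continuous_intros)



lemma finite_bounded_integral:
  "finite {v::real^'n. integral_vec v \<and> norm v \<le> R}"
proof -
  define T where "T = (real_of_int ` {-\<lceil>R\<rceil>..\<lceil>R\<rceil>})"
  have fT: "finite T" unfolding T_def by simp
  have sub: "{v::real^'n. integral_vec v \<and> norm v \<le> R} \<subseteq> (\<lambda>f. \<chi> i. f i) ` (PiE UNIV (\<lambda>_. T))"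
  proof
    fix v :: "real^'n" assume v: "v \<in> {v. integral_vec v \<and> norm v \<le> R}"
    have vi: "v $ i \<in> T" for i
    proof -
      have "v $ i \<in> \<int>" using v unfolding integral_vec_def by blast
      then obtain k where k: "v $ i = of_int k" by (elim Ints_cases)
      have "\<bar>v $ i\<bar> \<le> R" using v component_le_norm_cart[of v i] by auto
      hence "real_of_int \<bar>k\<bar> \<le> R" using k by simp
      hence "\<bar>k\<bar> \<le> \<lceil>R\<rceil>" by (metis ceiling_mono ceiling_of_int)
      hence "k \<in> {-\<lceil>R\<rceil>..\<lceil>R\<rceil>}" by (simp add: abs_le_iff)
      thus ?thesis unfolding T_def using k by blast
    qed
    have "vec_nth v \<in> PiE UNIV (\<lambda>_. T)" using vi by (simp add: PiE_iff)
    moreover have "v = vec_lambda (vec_nth v)" by simp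
    ultimately show "v \<in> (\<lambda>f. \<chi> i. f i) ` (PiE UNIV (\<lambda>_. T))" by (metis image_eqI)
  qed
  have "finite (PiE (UNIV::'n set) (\<lambda>_. T))" using fT by (simp add: finite_PiE)
  hence "finite ((\<lambda>f. \<chi> i. f i) ` (PiE (UNIV::'n set) (\<lambda>_. T)))" by (rule finite_imageI)
  thus ?thesis using sub by (rule finite_subset[rotated])
qed


lemma sig_lemma:
  fixes Q :: "real^'n^'n" and x y :: "real^'n"
  assumes sig: "signature_1_nm1 Q" and xx: "bform Q x x > 0" and xy: "bform Q x y = 0"
    and yy: "bform Q y y \<ge> 0"
  shows "y = 0"
proof -
  obtain S :: "real^'n^'n" and i0 where S: "invertible S" and
    D: "transpose S ** Q ** S = (\<chi> i j. if i = j then (if i = i0 then 1 else -1) else 0)"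
    using sig unfolding signature_1_nm1_def by blast
  obtain S' where S': "S ** S' = mat 1" using S unfolding invertible_def by blast
  define u where "u = S' *v x"
  define w where "w = S' *v y"
  have xu: "x = S *v u" by (simp add: u_def matrix_vector_mul_assoc S')
  have yw: "y = S *v w" by (simp add: w_def matrix_vector_mul_assoc S')
  define msk :: "real^'n \<Rightarrow> real^'n" where "msk a = (\<chi> i. if i = i0 then 0 else a$i)" for a
  have key: "bform Q (S *v a) (S *v b) = a$i0 * b$i0 - msk a \<bullet> msk b" for a b
  proof -
    have "S *v a = a v* transpose S" by (metis transpose_matrix_vector transpose_transpose)
    hence "bform Q (S *v a) (S *v b) = a \<bullet> (transpose S *v (Q *v (S *v b)))"
      unfolding bform_def dot_lmul_matrix[symmetric] by simp
    also have "\<dots> = a \<bullet> ((transpose S ** Q ** S) *v b)"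
      by (simp add: matrix_vector_mul_assoc matrix_mul_assoc)
    also have "\<dots> = (\<Sum>i\<in>UNIV. a$i * (if i = i0 then b$i else - b$i))"
      unfolding D inner_vec_def matrix_vector_mult_def
      by (simp add: if_distrib[of "\<lambda>z. z * _"] cong: if_cong)
    also have "\<dots> = (\<Sum>i\<in>UNIV. (if i = i0 then a$i * b$i else 0) - (if i = i0 then 0 else a$i * b$i))"
      by (intro sum.cong) auto
    also have "\<dots> = a$i0 * b$i0 - (\<Sum>i\<in>UNIV. (if i = i0 then 0 else a$i * b$i))"
      by (simp add: sum_subtractf)
    also have "(\<Sum>i\<in>UNIV. (if i = i0 then 0 else a$i * b$i)) = msk a \<bullet> msk b"
      unfolding msk_def inner_vec_def by (intro sum.cong) auto
    finally show ?thesis .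
  qed
  have h1: "u$i0 * u$i0 - msk u \<bullet> msk u > 0" using xx key[of u u] xu by simp
  have h2: "u$i0 * w$i0 - msk u \<bullet> msk w = 0" using xy key[of u w] xu yw by simp
  have h3: "w$i0 * w$i0 - msk w \<bullet> msk w \<ge> 0" using yy key[of w w] yw by simp
  have cs: "(msk u \<bullet> msk w)^2 \<le> (msk u \<bullet> msk u) * (msk w \<bullet> msk w)"
    by (rule Cauchy_Schwarz_ineq)
  have w0: "w$i0 = 0"
  proof (rule ccontr)
    assume ne: "w$i0 \<noteq> 0"
    have "(u$i0 * w$i0)^2 \<le> (msk u \<bullet> msk u) * (msk w \<bullet> msk w)" using cs h2 by simp
    also have "\<dots> \<le> (msk u \<bullet> msk u) * (w$i0 * w$i0)"
      using h3 by (intro mult_left_mono) auto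
    finally have "(u$i0 * u$i0) * (w$i0 * w$i0) \<le> (msk u \<bullet> msk u) * (w$i0 * w$i0)"
      by (simp add: power2_eq_square algebra_simps)
    moreover have "w$i0 * w$i0 > 0" using ne by (auto simp add: zero_less_mult_iff linorder_neq_iff)
    ultimately have "u$i0 * u$i0 \<le> msk u \<bullet> msk u" by (meson mult_le_cancel_right_pos)
    thus False using h1 by simp
  qed
  have "msk w \<bullet> msk w \<le> 0" using h3 w0 by simp
  hence mw: "msk w = 0" by (meson inner_ge_zero inner_eq_zero_iff order_antisym)
  have "w = 0"
  proof (subst vec_eq_iff, intro allI)
    fix i show "w $ i = 0 $ i"
    proof (cases "i = i0")
      case True thus ?thesis using w0 by simp
    next
      case False
      have "msk w $ i = 0" using mw by simp
      thus ?thesis using False unfolding msk_def by simp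
    qed
  qed
  thus ?thesis using yw by simp
qed



lemma sig_le:
  fixes Q :: "real^'n^'n" and x y :: "real^'n"
  assumes sig: "signature_1_nm1 Q" and xx: "bform Q x x > 0" and xy: "bform Q x y = 0"
  shows "bform Q y y \<le> 0"
proof (rule ccontr)
  assume "\<not> bform Q y y \<le> 0"
  hence "bform Q y y \<ge> 0" by simp
  hence "y = 0" using sig_lemma[OF sig xx xy] by blast
  thus False using \<open>\<not> bform Q y y \<le> 0\<close> by simp
qed

lemma rat_scale:
  fixes a :: "real^'n"
  assumes "rational_vec a"
  shows "\<exists>D>0. integral_vec (D *\<^sub>R a)"
proof -
  have "\<forall>i. \<exists>d::int. d > 0 \<and> of_int d * a$i \<in> \<int>"
  proof
    fix i
    have "a$i \<in> \<rat>" using assms unfolding rational_vec_def by blast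
    then obtain p q :: int where q: "q > 0" and e: "a$i = of_int p / of_int q" by (elim Rats_cases')
    have "of_int q * a$i = of_int p" using q e by simp
    thus "\<exists>d::int. d > 0 \<and> of_int d * a$i \<in> \<int>" using q by (intro exI[of _ q]) auto
  qed
  then obtain d :: "'n \<Rightarrow> int" where d: "\<And>i. d i > 0 \<and> of_int (d i) * a$i \<in> \<int>" by metis
  define D where "D = real_of_int (\<Prod>i\<in>UNIV. d i)"
  have "D > 0" unfolding D_def using d by (simp add: prod_pos)
  moreover have "integral_vec (D *\<^sub>R a)"
    unfolding integral_vec_def
  proof
    fix i
    have "(\<Prod>i\<in>UNIV. d i) = d i * (\<Prod>j\<in>UNIV-{i}. d j)"
      by (simp add: prod.remove)
    hence "D * a$i = real_of_int (\<Prod>j\<in>UNIV-{i}. d j) * (of_int (d i) * a$i)"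
      unfolding D_def by simp
    also have "\<dots> \<in> \<int>" using d[of i] by (metis Ints_mult Ints_of_int)
    finally show "(D *\<^sub>R a) $ i \<in> \<int>" by simp
  qed
  ultimately show ?thesis by blast
qed

lemma span2:
  fixes a b :: "real^'n"
  assumes "z \<in> span {a, b}"
  shows "\<exists>s t. z = s *\<^sub>R a + t *\<^sub>R b"
proof -
  obtain k where "z - k *\<^sub>R a \<in> span {b}" using assms unfolding span_insert by blast
  then obtain l where "z - k *\<^sub>R a = l *\<^sub>R b" unfolding span_singleton by blast
  hence "z = k *\<^sub>R a + l *\<^sub>R b" by (simp add: algebra_simps)
  thus ?thesis by blast
qed

lemma neg_bound:
  fixes Q :: "real^'n^'n" and x0 :: "real^'n"
  assumes sig: "signature_1_nm1 Q" and xx: "bform Q x0 x0 > 0"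
  shows "\<exists>m<0. \<forall>q. bform Q x0 q = 0 \<longrightarrow> bform Q q q \<le> m * (norm q)^2"
proof -
  define K where "K = {q. bform Q x0 q = 0} \<inter> sphere (0::real^'n) 1"
  have cl: "closed {q. bform Q x0 q = 0}"
    unfolding bform_def by (intro closed_Collect_eq continuous_intros)
  have cK: "compact K" unfolding K_def using cl by (intro closed_Int_compact compact_sphere)
  show ?thesis
  proof (cases "K = {}")
    case True
    have "bform Q q q \<le> (-1) * (norm q)^2" if "bform Q x0 q = 0" for q
    proof (cases "q = 0")
      case True thus ?thesis by simp
    next
      case False
      have "(1 / norm q) *\<^sub>R q \<in> K" unfolding K_def using that False
        by (simp add: bform_scale_right norm_scaleR)
      thus ?thesis using \<open>K = {}\<close> by blast
    qed
    thus ?thesis by (intro exI[of _ "-1"]) auto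
  next
    case False
    have "continuous_on K (\<lambda>q. bform Q q q)"
      using bform_cont continuous_on_subset by blast
    then obtain q0 where q0: "q0 \<in> K" and mx: "\<And>y. y \<in> K \<Longrightarrow> bform Q y y \<le> bform Q q0 q0"
      using continuous_attains_sup[OF cK False] by blast
    have q0o: "bform Q x0 q0 = 0" and q0n: "norm q0 = 1" using q0 unfolding K_def by auto
    have "q0 \<noteq> 0" using q0n by auto
    hence mneg: "bform Q q0 q0 < 0"
      using sig_lemma[OF sig xx q0o] sig_le[OF sig xx q0o] by force
    have "bform Q q q \<le> bform Q q0 q0 * (norm q)^2" if "bform Q x0 q = 0" for q
    proof (cases "q = 0")
      case True thus ?thesis by simp
    next
      case False
      have "(1 / norm q) *\<^sub>R q \<in> K" unfolding K_def using that False
        by (simp add: bform_scale_right norm_scaleR)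
      hence "bform Q ((1 / norm q) *\<^sub>R q) ((1 / norm q) *\<^sub>R q) \<le> bform Q q0 q0" by (rule mx)
      hence "bform Q q q / (norm q)^2 \<le> bform Q q0 q0"
        by (simp add: bform_scale_left bform_scale_right power2_eq_square)
      thus ?thesis using False by (simp add: divide_le_eq)
    qed
    thus ?thesis using mneg by blast
  qed
qed



theorem lemma3p2:
  fixes Q :: "real^'n^'n" and h :: "real^'n" and P :: "(real^'n) set" and N :: real
  assumes "lattice_gram Q"
    and "signature_1_nm1 Q"
    and "integral_vec h" and "bform Q h h > 0"
    and "N > 0"
    and "rational_2plane P"
    and "\<exists>w. w \<in> P \<and> rational_vec w \<and> w \<noteq> 0 \<and> bform Q w w = 0"
  shows "finite {v. integral_vec v \<and>
            (\<exists>x. bform Q v x = 0 \<and> x \<in> P \<and> x \<in> pos_cone Q h) \<and>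
            bform Q v v > - N}"
proof (cases "\<exists>x0. x0 \<in> P \<and> x0 \<in> pos_cone Q h")
  case False
  hence "{v. integral_vec v \<and>
            (\<exists>x. bform Q v x = 0 \<and> x \<in> P \<and> x \<in> pos_cone Q h) \<and>
            bform Q v v > - N} = {}" by blast
  thus ?thesis by (metis finite.emptyI)
next
  case True
  note g = assms(1) and sig = assms(2) and Npos = assms(5)
  have sym: "\<And>x y. bform Q x y = bform Q y x" using bform_sym[OF g] by blast
  obtain x0 where x0P: "x0 \<in> P" and x0c: "x0 \<in> pos_cone Q h" using True by blast
  have x0x0: "bform Q x0 x0 > 0" using x0c unfolding pos_cone_def by simp
  obtain a b where ar: "rational_vec a" and br: "rational_vec b" and Pab: "P = span {a, b}"
    and dimP: "dim P = 2"
    using assms(6) unfolding rational_2plane_def by blast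
  obtain w where wP: "w \<in> P" and wr: "rational_vec w" and wnz: "w \<noteq> 0" and ww: "bform Q w w = 0"
    using assms(7) by blast
  obtain Dw where Dw: "Dw > 0" "integral_vec (Dw *\<^sub>R w)" using rat_scale[OF wr] by blast
  define E where "E = Dw *\<^sub>R w"
  have EP: "E \<in> P" unfolding E_def Pab using wP Pab by (simp add: span_scale)
  have Enz: "E \<noteq> 0" unfolding E_def using Dw wnz by simp
  have EE: "bform Q E E = 0" unfolding E_def using ww by (simp add: bform_scale_left bform_scale_right)
  have Eint: "integral_vec E" unfolding E_def using Dw by simp
  have "bform Q E a \<noteq> 0 \<or> bform Q E b \<noteq> 0"
  proof (rule ccontr)
    assume "\<not> ?thesis"
    hence za: "bform Q E a = 0" and zb: "bform Q E b = 0" by auto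
    obtain s t where "x0 = s *\<^sub>R a + t *\<^sub>R b" using span2 x0P Pab by blast
    hence "bform Q x0 E = 0" using za zb sym by (simp add: bform_lin)
    hence "E = 0" using sig_lemma[OF sig x0x0] EE by simp
    thus False using Enz by simp
  qed
  then obtain f where fr: "rational_vec f" and fP: "f \<in> P" and Ef: "bform Q E f \<noteq> 0"
    using ar br Pab by (metis insertCI span_base)
  obtain Df where Df: "Df > 0" "integral_vec (Df *\<^sub>R f)" using rat_scale[OF fr] by blast
  define F where "F = Df *\<^sub>R f"
  have FP: "F \<in> P" unfolding F_def using fP Pab by (simp add: span_scale)
  have Fint: "integral_vec F" unfolding F_def using Df by simp
  define c where "c = bform Q E F"
  define d where "d = bform Q F F"
  have cnz: "c \<noteq> 0" unfolding c_def F_def using Ef Df by (simp add: bform_scale_right)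
  have cInt: "c \<in> \<int>" unfolding c_def using bform_int[OF g Eint Fint] .
  have dInt: "d \<in> \<int>" unfolding d_def using bform_int[OF g Fint Fint] .
  have FE: "bform Q F E = c" unfolding c_def using sym by simp
  have c1: "\<bar>c\<bar> \<ge> 1" using Ints_nonzero_abs_ge1[OF cInt cnz] .
  have Fnz: "F \<noteq> 0" using cnz unfolding c_def by auto
  have EnF: "E \<noteq> F" using cnz EE unfolding c_def by auto
  have indep: "independent {E, F}"
  proof -
    have "E \<notin> span {F}"
    proof
      assume "E \<in> span {F}"
      then obtain k where k: "E = k *\<^sub>R F" unfolding span_singleton by blast
      have ckd: "c = k * d" unfolding c_def d_def k by (simp add: bform_scale_left)
      have "k * (k * d) = 0" using EE k by (simp add: bform_scale_left bform_scale_right d_def)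
      hence "c = 0" using ckd by simp
      thus False using cnz by simp
    qed
    moreover have "independent {F}" using Fnz by simp
    ultimately show ?thesis by (simp add: independent_insertI)
  qed
  have "P \<subseteq> span {E, F}"
    using EP FP indep EnF dimP by (intro card_ge_dim_independent) auto
  hence spanEF: "\<And>z. z \<in> P \<Longrightarrow> \<exists>s t. z = s *\<^sub>R E + t *\<^sub>R F" using span2 by blast
  obtain m where mneg: "m < 0" and mb: "\<And>q. bform Q x0 q = 0 \<Longrightarrow> bform Q q q \<le> m * (norm q)^2"
    using neg_bound[OF sig x0x0] by blast
  define Bd where "Bd = N * c^2 * (1 + \<bar>d\<bar>)"
  define R where "R = Bd * (1 + \<bar>d\<bar>) * norm E + Bd * norm F + sqrt (N / (- m))"
  have Bd0: "Bd \<ge> 0" unfolding Bd_def using Npos by simp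
  have "{v. integral_vec v \<and>
            (\<exists>x. bform Q v x = 0 \<and> x \<in> P \<and> x \<in> pos_cone Q h) \<and>
            bform Q v v > - N} \<subseteq> {v. integral_vec v \<and> norm v \<le> R}"
  proof
    fix v assume "v \<in> {v. integral_vec v \<and>
            (\<exists>x. bform Q v x = 0 \<and> x \<in> P \<and> x \<in> pos_cone Q h) \<and>
            bform Q v v > - N}"
    then obtain x where vint: "integral_vec v" and vx: "bform Q v x = 0" and xP: "x \<in> P"
      and xc: "x \<in> pos_cone Q h" and vv: "bform Q v v > - N" by blast
    have xx: "bform Q x x > 0" using xc unfolding pos_cone_def by simp
    define \<alpha> where "\<alpha> = bform Q v E"
    define \<beta> where "\<beta> = bform Q v F"
    have \<alpha>I: "\<alpha> \<in> \<int>" unfolding \<alpha>_def using bform_int[OF g vint Eint] .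
    have \<beta>I: "\<beta> \<in> \<int>" unfolding \<beta>_def using bform_int[OF g vint Fint] .
    define \<mu> where "\<mu> = \<alpha> / c"
    define lam where "lam = (\<beta> - d * \<mu>) / c"
    define p where "p = lam *\<^sub>R E + \<mu> *\<^sub>R F"
    define q where "q = v - p"
    have pE: "bform Q p E = \<alpha>" unfolding p_def \<mu>_def using EE FE cnz by (simp add: bform_lin)
    have pF: "bform Q p F = \<beta>" unfolding p_def lam_def \<mu>_def using cnz
      by (simp add: bform_lin c_def[symmetric] d_def[symmetric] field_simps)
    have qE: "bform Q q E = 0" unfolding q_def using pE by (simp add: bform_lin \<alpha>_def)
    have qF: "bform Q q F = 0" unfolding q_def using pF by (simp add: bform_lin \<beta>_def)
    have qz: "bform Q q z = 0" if zP: "z \<in> P" for z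
    proof -
      obtain s t where "z = s *\<^sub>R E + t *\<^sub>R F" using spanEF[OF zP] by blast
      thus ?thesis using qE qF by (simp add: bform_lin)
    qed
    have qx: "bform Q x q = 0" using qz[OF xP] sym by simp
    have qx0: "bform Q x0 q = 0" using qz[OF x0P] sym by simp
    have px: "bform Q x p = 0"
    proof -
      have "bform Q v x = bform Q p x + bform Q q x" unfolding q_def by (simp add: bform_lin)
      thus ?thesis using vx qx sym by simp
    qed
    have pq: "bform Q p q = 0" unfolding p_def using qE qF sym by (simp add: bform_lin)
    have vpq: "bform Q v v = bform Q p p + bform Q q q"
    proof -
      have "v = p + q" unfolding q_def by simp
      hence "bform Q v v = bform Q p p + bform Q p q + bform Q q p + bform Q q q"
        by (simp add: bform_lin)
      thus ?thesis using pq sym by simp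
    qed
    have qq: "bform Q q q \<le> 0" using sig_le[OF sig xx qx] .
    have pp: "bform Q p p \<le> 0" using sig_le[OF sig xx px] .
    have "bform Q q q > - N" using vv vpq pp by simp
    hence "m * (norm q)^2 > - N" using mb[OF qx0] by simp
    hence "(norm q)^2 * (- m) \<le> N" by (simp add: algebra_simps)
    hence "(norm q)^2 \<le> N / (- m)" using pos_le_divide_eq[of "- m" "(norm q)^2" N] mneg by simp
    hence nq: "norm q \<le> sqrt (N / (- m))" by (rule real_le_rsqrt)
    have ab: "\<bar>\<alpha>\<bar> \<le> Bd \<and> \<bar>\<beta>\<bar> \<le> Bd"
    proof (cases "p = 0")
      case True
      hence "\<alpha> = 0" "\<beta> = 0" using pE pF by auto
      thus ?thesis using Bd0 by simp
    next
      case False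
      have "bform Q p p \<noteq> 0" using sig_lemma[OF sig xx px] False by force
      hence pneg: "bform Q p p < 0" using pp by simp
      have ppf: "bform Q p p = 2 * lam * \<mu> * c + \<mu>^2 * d"
        unfolding p_def using EE FE
        by (simp add: bform_lin c_def[symmetric] d_def[symmetric] power2_eq_square algebra_simps)
      define y where "y = 2 * \<beta> * c - d * \<alpha>"
      have yI: "y \<in> \<int>" unfolding y_def using \<alpha>I \<beta>I cInt dInt by (intro Ints_diff Ints_mult) auto
      have kk: "c^2 * bform Q p p = \<alpha> * y"
        unfolding ppf y_def lam_def \<mu>_def using cnz by (simp add: field_simps power2_eq_square)
      have c2: "c^2 > 0" using cnz by simp
      have "c^2 * bform Q p p < 0" using pneg c2 by (simp add: mult_pos_neg)
      hence ky: "\<alpha> * y < 0" using kk by simp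
      have "bform Q p p \<ge> bform Q v v" using vpq qq by simp
      hence "c^2 * bform Q p p \<ge> c^2 * (- N)" using vv c2 by (intro mult_left_mono) auto
      hence kb: "\<bar>\<alpha> * y\<bar> \<le> N * c^2" using kk ky by (simp add: mult.commute)
      have an: "\<alpha> \<noteq> 0" and yn: "y \<noteq> 0" using ky by auto
      have a1: "\<bar>\<alpha>\<bar> \<ge> 1" using Ints_nonzero_abs_ge1[OF \<alpha>I an] .
      have y1: "\<bar>y\<bar> \<ge> 1" using Ints_nonzero_abs_ge1[OF yI yn] .
      have "\<bar>\<alpha>\<bar> * 1 \<le> \<bar>\<alpha>\<bar> * \<bar>y\<bar>" using y1 by (intro mult_left_mono) auto
      hence aB: "\<bar>\<alpha>\<bar> \<le> N * c^2" using kb by (simp add: abs_mult)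
      have "1 * \<bar>y\<bar> \<le> \<bar>\<alpha>\<bar> * \<bar>y\<bar>" using a1 by (intro mult_right_mono) auto
      hence yB: "\<bar>y\<bar> \<le> N * c^2" using kb by (simp add: abs_mult)
      have Nc: "N * c^2 \<ge> 0" using Npos by simp
      have "\<bar>d * \<alpha>\<bar> \<le> \<bar>d\<bar> * (N * c^2)" unfolding abs_mult using aB by (intro mult_left_mono) auto
      hence "\<bar>2 * \<beta> * c\<bar> \<le> N * c^2 + \<bar>d\<bar> * (N * c^2)" using yB unfolding y_def by linarith
      moreover have "\<bar>\<beta>\<bar> * 1 \<le> \<bar>\<beta>\<bar> * \<bar>2 * c\<bar>" using c1 by (intro mult_left_mono) auto
      ultimately have "\<bar>\<beta>\<bar> \<le> Bd" unfolding Bd_def by (simp add: abs_mult algebra_simps)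
      moreover have "\<bar>\<alpha>\<bar> \<le> Bd"
      proof -
        have "N * c^2 * 1 \<le> N * c^2 * (1 + \<bar>d\<bar>)" using Nc by (intro mult_left_mono) auto
        thus ?thesis using aB unfolding Bd_def by linarith
      qed
      ultimately show ?thesis by simp
    qed
    have mu: "\<bar>\<mu>\<bar> \<le> Bd"
    proof -
      have "\<bar>\<mu>\<bar> = \<bar>\<alpha>\<bar> / \<bar>c\<bar>" unfolding \<mu>_def by (simp add: abs_divide)
      also have "\<dots> \<le> \<bar>\<alpha>\<bar>"
      proof -
        have "\<bar>\<alpha>\<bar> * 1 \<le> \<bar>\<alpha>\<bar> * \<bar>c\<bar>" using c1 by (intro mult_left_mono) auto
        thus ?thesis using c1 cnz by (simp add: divide_le_eq)
      qed
      finally show ?thesis using ab by simp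
    qed
    have la: "\<bar>lam\<bar> \<le> Bd * (1 + \<bar>d\<bar>)"
    proof -
      have "\<bar>lam\<bar> = \<bar>\<beta> - d * \<mu>\<bar> / \<bar>c\<bar>" unfolding lam_def by (simp add: abs_divide)
      also have "\<dots> \<le> \<bar>\<beta> - d * \<mu>\<bar>"
      proof -
        have "\<bar>\<beta> - d * \<mu>\<bar> * 1 \<le> \<bar>\<beta> - d * \<mu>\<bar> * \<bar>c\<bar>" using c1 by (intro mult_left_mono) auto
        thus ?thesis using c1 cnz by (simp add: divide_le_eq)
      qed
      also have "\<dots> \<le> \<bar>\<beta>\<bar> + \<bar>d\<bar> * \<bar>\<mu>\<bar>" using abs_triangle_ineq4[of \<beta> "d * \<mu>"] by (simp add: abs_mult)
      also have "\<dots> \<le> Bd + \<bar>d\<bar> * Bd" using ab mu by (intro add_mono mult_left_mono) auto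
      finally show ?thesis by (simp add: algebra_simps)
    qed
    have np: "norm p \<le> Bd * (1 + \<bar>d\<bar>) * norm E + Bd * norm F"
    proof -
      have "norm p \<le> \<bar>lam\<bar> * norm E + \<bar>\<mu>\<bar> * norm F" unfolding p_def
        using norm_triangle_ineq[of "lam *\<^sub>R E" "\<mu> *\<^sub>R F"] by simp
      also have "\<dots> \<le> Bd * (1 + \<bar>d\<bar>) * norm E + Bd * norm F"
        using la mu by (intro add_mono mult_right_mono) auto
      finally show ?thesis .
    qed
    have "v = p + q" unfolding q_def by simp
    hence "norm v \<le> norm p + norm q" using norm_triangle_ineq[of p q] by simp
    hence "norm v \<le> R" unfolding R_def using np nq by linarith
    thus "v \<in> {v. integral_vec v \<and> norm v \<le> R}" using vint by simp
  qed
  thus ?thesis using finite_bounded_integral finite_subset by blast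
qed


end
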